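(* Let $f:\mathbb{R}_{\ge0}\to\mathbb{R}_{\ge0}$ be strictly increasing, let $\alpha\in[0,1)$, and let $$X(f,\alpha)=\{f(n)e^{2\pi i n\alpha}\ :\ n\in\mathbb{N}\}\subset\mathbb{C}.$$ If $X(f,\alpha)$ is $r$-relatively dense, then $\limsup_{n\to\infty} f(n)/\sqrt{n}<2r$. If $X(f,\alpha)$ is $s$-uniformly discrete, then $\liminf_{n\to\infty} f(n)/\sqrt{n}>s/2$.
   Context: $\mathbb{C}$ is identified with $\mathbb{R}^2$, and $B(x,r)$ denotes the open disk of radius $r$ centered at $x$. A set $X\subset\mathbb{C}$ is $r$-relatively dense ($r>0$) if $B(x,r)\cap X\ne\emptyset$ for every $x\in\mathbb{C}$. It is $s$-uniformly discrete ($s>0$) if $\mathrm{Card}(B(x,s)\cap X)\le1$ for every $x\in\mathbb{C}$. *)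

theory Defs
  imports "HOL-Analysis.Analysis"
begin

definition rel_dense :: "real \<Rightarrow> complex set \<Rightarrow> bool" where
  "rel_dense r X \<longleftrightarrow> r > 0 \<and> (\<forall>x. ball x r \<inter> X \<noteq> {})"

definition unif_discrete :: "real \<Rightarrow> complex set \<Rightarrow> bool" where
  "unif_discrete s X \<longleftrightarrow> s > 0 \<and> (\<forall>x. finite (ball x s \<inter> X) \<and> card (ball x s \<inter> X) \<le> 1)"

definition spiral_set :: "(real \<Rightarrow> real) \<Rightarrow> real \<Rightarrow> complex set" where
  "spiral_set f \<alpha> = {complex_of_real (f (real n)) * exp (2 * of_real pi * \<i> * of_nat n * of_real \<alpha>) | n :: nat. True}"

end

theory Submission
  imports Defs
begin

lemma norm_diff_sq_inner:
  fixes a b :: complex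
  shows "(norm (a - b))^2 = (norm a)^2 - 2 * inner a b + (norm b)^2"
  using dot_norm_neg[of a b] by simp

lemma blocked:
  fixes v u :: complex and \<rho> :: real
  assumes "\<rho> > 0" "cmod u = 1" "cmod v \<ge> 2*\<rho>"
    "cmod (v - of_real (401/400*\<rho>) * u) < 403/400*\<rho>"
  shows "cmod (v - of_real (2*\<rho>) * u) < \<rho>/5"
proof -
  have e1: "(cmod (v - of_real c * u))^2 = (cmod v)^2 - 2*c*inner v u + c^2" for c :: real
  proof -
    have "of_real c * u = c *\<^sub>R u" by (simp add: scaleR_conv_of_real)
    then show ?thesis using norm_diff_sq_inner[of v "c *\<^sub>R u"] assms(2)
      by (simp add: power_mult_distrib)
  qed
  have h0: "(cmod (v - of_real (401/400*\<rho>) * u))^2 < (403/400*\<rho>)^2"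
    by (rule power_strict_mono) (use assms in auto)
  have h: "(cmod v)^2 - 2*(401/400*\<rho>)*inner v u + (401/400*\<rho>)^2 < (403/400*\<rho>)^2"
    using h0 unfolding e1 .
  have N: "(cmod v)^2 \<ge> 4*\<rho>^2"
  proof -
    have "(2*\<rho>)^2 \<le> (cmod v)^2" using assms(1,3) by (intro power_mono) auto
    then show ?thesis by (simp add: power_mult_distrib)
  qed
  define I where "I = inner v u"
  define Nv where "Nv = (cmod v)^2"
  have h': "Nv - (401/200)*(\<rho>*I) + (160801/160000)*\<rho>^2 < (162409/160000)*\<rho>^2"
  proof -
    have p: "(401/400*\<rho>)^2 = (160801/160000)*\<rho>^2" "(403/400*\<rho>)^2 = (162409/160000)*\<rho>^2"
      "2*(401/400*\<rho>)*I = (401/200)*(\<rho>*I)" by (simp_all add: power2_eq_square)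
    show ?thesis using h p unfolding I_def[symmetric] Nv_def[symmetric] by linarith
  qed
  have N': "Nv \<ge> 4*\<rho>^2" using N Nv_def by simp
  have g: "Nv - 4*(\<rho>*I) + 4*\<rho>^2 < (1/25)*\<rho>^2" using h' N' by linarith
  have "(cmod (v - of_real (2*\<rho>) * u))^2 < (\<rho>/5)^2"
  proof -
    have p: "(2*\<rho>)^2 = 4*\<rho>^2" "(\<rho>/5)^2 = (1/25)*\<rho>^2"
      "2*(2*\<rho>)*I = 4*(\<rho>*I)" by (simp_all add: power2_eq_square)
    show ?thesis unfolding e1 using g p unfolding I_def[symmetric] Nv_def[symmetric] by linarith
  qed
  then show ?thesis by (rule power2_less_imp_less) (use assms(1) in simp)
qed

lemma two_dirs:
  fixes v1 v2 :: complex and \<rho> :: real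
  assumes "\<rho> > 0" "cmod v1 \<ge> 2*\<rho>" "cmod v2 \<ge> 2*\<rho>"
    "cmod (v1 - of_real (401/400*\<rho>) * 1) < 403/400*\<rho>"
    "cmod (v2 - of_real (401/400*\<rho>) * Complex (4/5) (3/5)) < 403/400*\<rho>"
    "v1 = v2 \<or> cmod (v1 - v2) \<ge> 2*\<rho>"
  shows False
proof -
  define w where "w = Complex (4/5) (3/5)"
  have w1: "cmod w = 1" unfolding w_def cmod_def by (simp add: power2_eq_square)
  have a1: "cmod (v1 - of_real (2*\<rho>) * 1) < \<rho>/5"
    by (rule blocked) (use assms in auto)
  have a2: "cmod (v2 - of_real (2*\<rho>) * w) < \<rho>/5"
    by (rule blocked) (use assms w1 w_def in auto)
  have cw: "cmod (1 - w) = sqrt (2/5)" unfolding w_def cmod_def by (simp add: power2_eq_square)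
  have s1: "sqrt (2/5) > 1/5" by (rule real_less_rsqrt) (simp add: power2_eq_square)
  have s2: "sqrt (2/5) < 4/5" 
  proof -
    have "sqrt (2/5) < sqrt ((4/5)^2)" by (rule real_sqrt_less_mono) (simp add: power2_eq_square)
    then show ?thesis by simp
  qed
  define d where "d = of_real (2*\<rho>) * (1 - w)"
  have dn: "cmod d = 2*\<rho>* sqrt (2/5)" unfolding d_def norm_mult cw using assms(1) by simp
  have eq: "v1 - v2 = (v1 - of_real (2*\<rho>) * 1) - (v2 - of_real (2*\<rho>) * w) + d"
    unfolding d_def by (simp add: algebra_simps)
  have up: "cmod (v1 - v2) \<le> cmod (v1 - of_real (2*\<rho>) * 1) + cmod (v2 - of_real (2*\<rho>) * w) + cmod d"
    unfolding eq using norm_triangle_ineq[of "v1 - of_real (2*\<rho>) * 1 - (v2 - of_real (2*\<rho>) * w)" d]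
      norm_triangle_ineq4[of "v1 - of_real (2*\<rho>) * 1" "v2 - of_real (2*\<rho>) * w"] by linarith
  have lo: "cmod d \<le> cmod (v1 - v2) + cmod (v1 - of_real (2*\<rho>) * 1) + cmod (v2 - of_real (2*\<rho>) * w)"
  proof -
    have deq: "d = (v1 - v2) - (v1 - of_real (2*\<rho>) * 1) + (v2 - of_real (2*\<rho>) * w)"
      unfolding d_def by (simp add: algebra_simps)
    show ?thesis apply (subst deq) using norm_triangle_ineq[of "(v1 - v2) - (v1 - of_real (2*\<rho>) * 1)" "v2 - of_real (2*\<rho>) * w"]
      norm_triangle_ineq4[of "v1 - v2" "v1 - of_real (2*\<rho>) * 1"] by linarith
  qed
  have l1: "2*\<rho>* sqrt (2/5) < 2*\<rho>*(4/5)" and l2: "2*\<rho>*(1/5) < 2*\<rho>* sqrt (2/5)"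
    using s1 s2 assms(1) by auto
  have b1: "cmod (v1 - v2) < 2*\<rho>" using up a1 a2 dn l1 by linarith
  have b2: "cmod (v1 - v2) > 0" using lo a1 a2 dn l2 by linarith
  show False using assms(6) b1 b2 by auto
qed


lemma packing:
  fixes x :: "nat \<Rightarrow> complex" and \<rho> R :: real and m :: nat
  assumes rho: "\<rho> > 0" and sep: "\<And>i j. i \<noteq> j \<Longrightarrow> cmod (x i - x j) \<ge> 2*\<rho>"
    and bnd: "\<And>i. i \<le> m \<Longrightarrow> cmod (x i) \<le> R"
  shows "real (Suc m) * (\<rho>^2 + (\<rho>/400)^2) \<le> (R + \<rho> + 2*(\<rho>/400))^2"
proof -
  define \<delta> where "\<delta> = \<rho>/400"
  define w where "w = Complex (4/5) (3/5)"
  have w1: "cmod w = 1" unfolding w_def cmod_def by (simp add: power2_eq_square)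
  define free where "free n u \<longleftrightarrow> (\<forall>j. j \<noteq> n \<longrightarrow> cmod (x j - (x n + of_real (401/400*\<rho>) * u)) \<ge> 403/400*\<rho>)" for n u
  have fr: "free n 1 \<or> free n w" for n
  proof (rule ccontr)
    assume "\<not> (free n 1 \<or> free n w)"
    then obtain j1 j2 where j: "j1 \<noteq> n" "j2 \<noteq> n"
      "cmod (x j1 - (x n + of_real (401/400*\<rho>) * 1)) < 403/400*\<rho>"
      "cmod (x j2 - (x n + of_real (401/400*\<rho>) * w)) < 403/400*\<rho>"
      unfolding free_def by force
    show False
    proof (rule two_dirs[of \<rho> "x j1 - x n" "x j2 - x n"])
      show "\<rho> > 0" by (rule rho)
      show "cmod (x j1 - x n) \<ge> 2*\<rho>" using sep j(1) by auto
      show "cmod (x j2 - x n) \<ge> 2*\<rho>" using sep j(2) by auto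
      show "cmod (x j1 - x n - of_real (401/400*\<rho>) * 1) < 403/400*\<rho>"
        using j(3) by (simp add: diff_diff_eq)
      show "cmod (x j2 - x n - of_real (401/400*\<rho>) * Complex (4/5) (3/5)) < 403/400*\<rho>"
        using j(4) by (simp add: diff_diff_eq w_def)
      show "x j1 - x n = x j2 - x n \<or> 2*\<rho> \<le> cmod (x j1 - x n - (x j2 - x n))"
        using sep[of j1 j2] by (cases "j1 = j2") auto
    qed
  qed
  define u where "u n = (if free n 1 then 1 else w)" for n
  have fu: "free n (u n)" for n using fr[of n] u_def by auto
  have un: "cmod (u n) = 1" for n using w1 u_def by auto
  define c where "c n = x n + of_real (401/400*\<rho>) * u n" for n
  have far: "cmod (x j - c n) \<ge> 403/400*\<rho>" if "j \<noteq> n" for j n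
    using fu[of n] that unfolding free_def c_def by auto
  have xc: "cmod (c n - x n) = 401/400*\<rho>" for n
    unfolding c_def using un[of n] rho by (simp add: norm_mult)
  define E where "E n = ball (x n) \<rho> \<union> ball (c n) \<delta>" for n
  have dj: "disjoint_family_on E {..m}"
    unfolding disjoint_family_on_def
  proof (intro ballI impI)
    fix n j assume "n \<in> {..m}" "j \<in> {..m}" "n \<noteq> j"
    show "E n \<inter> E j = {}"
    proof (rule ccontr)
      assume "E n \<inter> E j \<noteq> {}"
      then obtain z where z: "z \<in> E n" "z \<in> E j" by blast
      have sn: "dist (x n) (x j) \<ge> 2*\<rho>" using sep \<open>n \<noteq> j\<close> by (simp add: dist_norm)
      have fn: "dist (x j) (c n) \<ge> 403/400*\<rho>" "dist (x n) (c j) \<ge> 403/400*\<rho>"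
        using far \<open>n \<noteq> j\<close> by (auto simp: dist_norm)
      have xcs: "dist (x j) (c j) = 401/400*\<rho>"
        using xc by (simp add: dist_norm norm_minus_commute)
      have zn: "dist (x n) z < \<rho> \<or> dist (c n) z < \<delta>" and zj: "dist (x j) z < \<rho> \<or> dist (c j) z < \<delta>"
        using z unfolding E_def by auto
      have t1: "dist (x n) (x j) \<le> dist (x n) z + dist (x j) z" by (rule dist_triangle2)
      have t2: "dist (x j) (c n) \<le> dist (x j) z + dist (c n) z" by (rule dist_triangle2)
      have t3: "dist (x n) (c j) \<le> dist (x n) z + dist (c j) z" by (rule dist_triangle2)
      have t4: "dist (c j) (c n) \<le> dist (c j) z + dist (c n) z" by (rule dist_triangle2)
      have t5: "dist (x j) (c n) \<le> dist (x j) (c j) + dist (c j) (c n)" by (rule dist_triangle)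
      from zn zj show False using t1 t2 t3 t4 t5 sn fn xcs rho \<delta>_def by linarith
    qed
  qed
  define V where "V = measure lborel (ball (0::complex) 1)"
  have V: "V > 0" unfolding V_def by (rule content_ball_pos) simp
  have cb: "measure lborel (ball a r) = r^2 * V" if "r \<ge> 0" for a :: complex and r
    using content_ball_conv_unit_ball[OF that, of a] unfolding V_def by simp
  have fin: "emeasure lborel (ball a r) \<noteq> \<infinity>" for a :: complex and r
    using emeasure_lborel_ball_finite[of a r] by simp
  have mE: "measure lborel (E n) = (\<rho>^2 + \<delta>^2) * V" for n
  proof -
    have d: "ball (x n) \<rho> \<inter> ball (c n) \<delta> = {}"
    proof (rule ccontr)
      assume "ball (x n) \<rho> \<inter> ball (c n) \<delta> \<noteq> {}"
      then obtain z where "dist (x n) z < \<rho>" "dist (c n) z < \<delta>" by auto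
      moreover have "dist (c n) (x n) \<le> dist (c n) z + dist (x n) z" by (rule dist_triangle2)
      ultimately show False using xc[of n] \<delta>_def by (simp add: dist_norm)
    qed
    have "measure lborel (E n) = measure lborel (ball (x n) \<rho>) + measure lborel (ball (c n) \<delta>)"
      unfolding E_def by (rule measure_Union) (use fin d in auto)
    also have "\<dots> = (\<rho>^2 + \<delta>^2) * V" using cb rho \<delta>_def by (simp add: algebra_simps)
    finally show ?thesis .
  qed
  have fE: "emeasure lborel (E n) \<noteq> \<infinity>" for n
  proof -
    have "emeasure lborel (E n) \<le> emeasure lborel (ball (x n) \<rho>) + emeasure lborel (ball (c n) \<delta>)"
      unfolding E_def by (rule emeasure_subadditive) auto
    then show ?thesis using emeasure_lborel_ball_finite[of "x n" \<rho>] emeasure_lborel_ball_finite[of "c n" \<delta>]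
      by (auto simp: top_unique ennreal_add_eq_top)
  qed
  have R0: "R \<ge> 0" using bnd[of 0] norm_ge_zero[of "x 0"] by linarith
  have sub: "(\<Union>n\<in>{..m}. E n) \<subseteq> ball 0 (R + \<rho> + 2*\<delta>)"
  proof
    fix z assume "z \<in> (\<Union>n\<in>{..m}. E n)"
    then obtain n where n: "n \<le> m" "z \<in> E n" by auto
    have t: "cmod z \<le> cmod (x n) + cmod (z - x n)" by (rule norm_triangle_sub)
    have t2: "dist z (x n) \<le> dist z (c n) + dist (c n) (x n)" by (rule dist_triangle)
    have zz: "dist z (x n) < \<rho> \<or> dist z (c n) < \<delta>"
      using n(2) unfolding E_def by (auto simp: dist_commute)
    have "cmod z < R + \<rho> + 2*\<delta>"
      using zz t t2 bnd[OF n(1)] xc[of n] rho \<delta>_def by (auto simp: dist_norm)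
    then show "z \<in> ball 0 (R + \<rho> + 2*\<delta>)" by simp
  qed
  have "real (Suc m) * ((\<rho>^2 + \<delta>^2) * V) = (\<Sum>n\<in>{..m}. measure lborel (E n))"
    using mE by simp
  also have "\<dots> = measure lborel (\<Union>n\<in>{..m}. E n)"
  proof (rule measure_finite_Union[symmetric])
    show "E ` {..m} \<subseteq> sets lborel" by (auto simp: E_def)
  qed (use dj fE in auto)
  also have "\<dots> \<le> measure lborel (ball (0::complex) (R + \<rho> + 2*\<delta>))"
    by (rule measure_mono_fmeasurable[OF sub]) (auto simp: E_def fmeasurable_def emeasure_lborel_ball_finite[unfolded infinity_ennreal_def])
  also have "\<dots> = (R + \<rho> + 2*\<delta>)^2 * V" using cb R0 rho \<delta>_def by simp
  finally have "real (Suc m) * (\<rho>^2 + \<delta>^2) * V \<le> (R + \<rho> + 2*\<delta>)^2 * V" by (simp add: mult.assoc)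
  then show ?thesis using V \<delta>_def by simp
qed

lemma grid_count:
  fixes x :: "nat \<Rightarrow> complex" and r :: real and k m :: nat
  assumes r: "r > 0" and cover: "\<And>y. \<exists>n. dist y (x n) < r"
    and mono: "\<And>i j. i \<le> j \<Longrightarrow> cmod (x i) \<le> cmod (x j)"
    and mk: "m < (2*k+1)^2"
  shows "cmod (x m) < 3*r*k + r"
proof -
  obtain g where g: "\<And>y. dist y (x (g y)) < r" using cover by metis
  define S where "S = {-int k..int k} \<times> {-int k..int k}"
  define p where "p ij = Complex (2*r* of_int (fst ij)) (2*r* of_int (snd ij))" for ij :: "int \<times> int"
  define h where "h ij = g (p ij)" for ij
  have inj: "inj_on h S"
  proof (rule inj_onI)
    fix a b assume ab: "a \<in> S" "b \<in> S" "h a = h b"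
    show "a = b"
    proof (rule ccontr)
      assume ne: "a \<noteq> b"
      have far: "cmod (p a - p b) \<ge> 2*r"
      proof (cases "fst a = fst b")
        case True
        then have "snd a \<noteq> snd b" using ne by (simp add: prod_eq_iff)
        then have "\<bar>snd a - snd b\<bar> \<ge> 1" by linarith
        then have "\<bar>real_of_int (snd a) - of_int (snd b)\<bar> \<ge> 1"
          by (metis of_int_abs of_int_diff of_int_le_iff of_int_1)
        then have "2*r \<le> \<bar>Im (p a - p b)\<bar>" using r unfolding p_def
          by (simp add: abs_mult right_diff_distrib[symmetric])
        then show ?thesis using abs_Im_le_cmod[of "p a - p b"] by linarith
      next
        case False
        then have "\<bar>fst a - fst b\<bar> \<ge> 1" by linarith
        then have "\<bar>real_of_int (fst a) - of_int (fst b)\<bar> \<ge> 1"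
          by (metis of_int_abs of_int_diff of_int_le_iff of_int_1)
        then have "2*r \<le> \<bar>Re (p a - p b)\<bar>" using r unfolding p_def
          by (simp add: abs_mult right_diff_distrib[symmetric])
        then show ?thesis using abs_Re_le_cmod[of "p a - p b"] by linarith
      qed
      have "dist (p a) (p b) \<le> dist (p a) (x (h a)) + dist (p b) (x (h a))" by (rule dist_triangle2)
      moreover have "dist (p a) (x (h a)) < r" "dist (p b) (x (h a)) < r"
        using g[of "p a"] g[of "p b"] ab(3) unfolding h_def by auto
      ultimately show False using far by (simp add: dist_norm)
    qed
  qed
  have fS: "finite S" unfolding S_def by simp
  have cS: "card S = (2*k+1)^2"
    unfolding S_def card_cartesian_product by (simp add: power2_eq_square nat_add_distrib nat_mult_distrib)
  have ch: "card (h ` S) = (2*k+1)^2" using card_image[OF inj] cS by simp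
  have bnd: "cmod (x (h a)) < 3*r*k + r" if a: "a \<in> S" for a
  proof -
    have i: "\<bar>real_of_int (fst a)\<bar> \<le> real k" "\<bar>real_of_int (snd a)\<bar> \<le> real k"
      using a unfolding S_def by (auto simp: mem_Times_iff)
    have i2: "(real_of_int (fst a))^2 \<le> (real k)^2" "(real_of_int (snd a))^2 \<le> (real k)^2"
      using i by (auto simp: abs_le_square_iff[symmetric])
    have "(cmod (p a))^2 = (2*r* of_int (fst a))^2 + (2*r* of_int (snd a))^2"
      unfolding p_def complex_norm by simp
    also have "\<dots> = 4*r^2*((real_of_int (fst a))^2 + (real_of_int (snd a))^2)"
      by (simp add: power_mult_distrib algebra_simps)
    also have "\<dots> \<le> 4*r^2*(2*(real k)^2)" using i2 r by (intro mult_left_mono) auto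
    also have "\<dots> \<le> (3*r*real k)^2" using r by (simp add: power_mult_distrib)
    finally have "cmod (p a) \<le> 3*r*real k" by (rule power2_le_imp_le) (use r in simp)
    moreover have "cmod (x (h a)) \<le> cmod (p a) + cmod (x (h a) - p a)" by (rule norm_triangle_sub)
    moreover have "cmod (x (h a) - p a) < r" using g[of "p a"] unfolding h_def by (simp add: dist_norm norm_minus_commute)
    ultimately show ?thesis by linarith
  qed
  have ne: "h ` S \<noteq> {}" unfolding S_def by auto
  define M where "M = Max (h ` S)"
  have MS: "M \<in> h ` S" unfolding M_def using fS ne by (intro Max_in) auto
  have "card (h ` S) \<le> Suc M" unfolding M_def by (rule card_le_Suc_Max) (use fS in simp)
  then have "m \<le> M" using mk ch by simp
  then have "cmod (x m) \<le> cmod (x M)" by (rule mono)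
  moreover have "cmod (x M) < 3*r*k + r" using MS bnd by auto
  ultimately show ?thesis by linarith
qed

theorem lemma1:
  fixes f :: "real \<Rightarrow> real" and \<alpha> r s :: real
  assumes "\<forall>x\<ge>0. f x \<ge> 0"
    and "strict_mono_on {0..} f"
    and "0 \<le> \<alpha>" and "\<alpha> < 1"
  shows "(rel_dense r (spiral_set f \<alpha>) \<longrightarrow>
            limsup (\<lambda>n::nat. ereal (f (real n) / sqrt (real n))) < ereal (2 * r))
       \<and> (unif_discrete s (spiral_set f \<alpha>) \<longrightarrow>
            liminf (\<lambda>n::nat. ereal (f (real n) / sqrt (real n))) > ereal (s / 2))"
proof -
  define x where "x n = complex_of_real (f (real n)) * exp (2 * of_real pi * \<i> * of_nat n * of_real \<alpha>)" for n :: nat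
  have X: "spiral_set f \<alpha> = range x" unfolding spiral_set_def x_def by auto
  have nx: "cmod (x n) = f (real n)" for n
  proof -
    have "cmod (exp (2 * of_real pi * \<i> * of_nat n * of_real \<alpha>)) = 1"
      unfolding norm_exp_eq_Re by simp
    then show ?thesis unfolding x_def norm_mult using assms(1) by simp
  qed
  have fmono: "f (real i) < f (real j)" if "i < j" for i j :: nat
    using assms(2) that by (auto intro: strict_mono_onD)
  have fle: "f (real i) \<le> f (real j)" if "i \<le> j" for i j :: nat
    using fmono[of i j] that by (cases "i = j") auto
  show ?thesis
  proof (intro conjI impI)
    assume rd: "rel_dense r (spiral_set f \<alpha>)"
    then have r: "r > 0" unfolding rel_dense_def by simp
    have cov: "\<exists>n. dist y (x n) < r" for y
    proof -
      from rd have "ball y r \<inter> range x \<noteq> {}" unfolding rel_dense_def X by simp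
      then show ?thesis by auto
    qed
    have key: "f (real m) < 3*r*k + r" if "m < (2*k+1)^2" for m k
      using grid_count[of r x m k, OF r cov _ that] nx fle by simp
    have ev: "eventually (\<lambda>m. ereal (f (real m) / sqrt (real m)) \<le> ereal (19/10*r)) sequentially"
      unfolding eventually_sequentially
    proof (intro exI allI impI)
      fix m :: nat assume m100: "100 \<le> m"
      define t where "t = sqrt (real m)"
      have t10: "10 \<le> t" unfolding t_def by (rule real_le_rsqrt) (use m100 in simp)
      define k where "k = nat \<lceil>t/2\<rceil>"
      have rk: "real k = of_int \<lceil>t/2\<rceil>" unfolding k_def using t10 by simp
      have k1: "real k \<ge> t/2" unfolding rk by (rule le_of_int_ceiling)
      have k2: "real k \<le> t/2 + 1" unfolding rk by (rule of_int_ceiling_le_add_one)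
      have "real m = t^2" unfolding t_def by simp
      also have "\<dots> < (2*real k + 1)^2" using k1 t10 by (intro power_strict_mono) auto
      also have "\<dots> = real ((2*k+1)^2)" by simp
      finally have "m < (2*k+1)^2" by (simp only: of_nat_less_iff)
      then have fm: "f (real m) < 3*r*k + r" by (rule key)
      have rt: "r * t \<ge> r * 10" using r t10 by (intro mult_left_mono) auto
      have "3*r*k \<le> 3*r*(t/2+1)" using k2 r by (intro mult_left_mono) auto
      moreover have "3*r*(t/2+1) = 3/2*(r*t) + 3*r" by (simp add: algebra_simps)
      ultimately have "f (real m) \<le> 19/10*(r*t)" using fm rt by linarith
      then have "f (real m) / t \<le> 19/10*r" using t10 by (simp add: divide_le_eq mult.commute mult.left_commute)
      then show "ereal (f (real m) / sqrt (real m)) \<le> ereal (19/10*r)" unfolding t_def by simp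
    qed
    have "limsup (\<lambda>n::nat. ereal (f (real n) / sqrt (real n))) \<le> ereal (19/10*r)"
      by (rule Limsup_bounded[OF ev])
    also have "\<dots> < ereal (2*r)" using r by simp
    finally show "limsup (\<lambda>n::nat. ereal (f (real n) / sqrt (real n))) < ereal (2 * r)" .
  next
    assume ud: "unif_discrete s (spiral_set f \<alpha>)"
    then have s: "s > 0" and ud': "\<And>y. finite (ball y s \<inter> range x) \<and> card (ball y s \<inter> range x) \<le> 1"
      unfolding unif_discrete_def X by auto
    define \<rho> where "\<rho> = s/2"
    have rho: "\<rho> > 0" using s \<rho>_def by simp
    have sep: "cmod (x i - x j) \<ge> 2*\<rho>" if ij: "i \<noteq> j" for i j
    proof (rule ccontr)
      assume "\<not> cmod (x i - x j) \<ge> 2*\<rho>"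
      then have d: "dist (x i) (x j) < s" using \<rho>_def by (simp add: dist_norm)
      have "f (real i) \<noteq> f (real j)" using fmono[of i j] fmono[of j i] ij by (cases "i < j") auto
      then have ne: "x i \<noteq> x j" using nx[of i] nx[of j] by auto
      have sub: "{x i, x j} \<subseteq> ball (x i) s \<inter> range x" using d s by auto
      have "card {x i, x j} \<le> card (ball (x i) s \<inter> range x)"
        using ud'[of "x i"] sub by (intro card_mono) auto
      then show False using ne ud'[of "x i"] by simp
    qed
    have pk: "real (Suc m) * (\<rho>^2 + (\<rho>/400)^2) \<le> (f (real m) + \<rho> + 2*(\<rho>/400))^2" for m
      using packing[of \<rho> x m "f (real m)", OF rho sep] nx fle by simp
    define \<kappa> where "\<kappa> = \<rho>*(480001/480000)"
    have kap: "\<kappa>^2 \<le> \<rho>^2 + (\<rho>/400)^2"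
    proof -
      have "\<kappa>^2 = \<rho>^2 * (480001/480000)^2" unfolding \<kappa>_def by (rule power_mult_distrib)
      also have "\<dots> \<le> \<rho>^2 * (1 + 1/160000)" by (intro mult_left_mono) (auto simp: power2_eq_square)
      also have "\<dots> = \<rho>^2 + (\<rho>/400)^2" by (simp add: power2_eq_square algebra_simps)
      finally show ?thesis .
    qed
    have ev: "eventually (\<lambda>m. ereal (\<rho>*(960001/960000)) \<le> ereal (f (real m) / sqrt (real m))) sequentially"
      unfolding eventually_sequentially
    proof (intro exI allI impI)
      fix m :: nat assume mbig: "1000000000000 \<le> m"
      define t where "t = sqrt (real m)"
      have tbig: "1000000 \<le> t" unfolding t_def by (rule real_le_rsqrt) (use mbig in simp)
      have f0: "f (real m) \<ge> 0" using assms(1) by simp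
      have "(sqrt (real (Suc m)) * \<kappa>)^2 = real (Suc m) * \<kappa>^2" by (simp add: power_mult_distrib)
      also have "\<dots> \<le> real (Suc m) * (\<rho>^2 + (\<rho>/400)^2)" using kap by (intro mult_left_mono) auto
      also have "\<dots> \<le> (f (real m) + \<rho> + 2*(\<rho>/400))^2" by (rule pk)
      finally have "sqrt (real (Suc m)) * \<kappa> \<le> f (real m) + \<rho> + 2*(\<rho>/400)"
        by (rule power2_le_imp_le) (use f0 rho in simp)
      moreover have "t * \<kappa> \<le> sqrt (real (Suc m)) * \<kappa>"
        unfolding t_def using rho \<kappa>_def by (intro mult_right_mono) auto
      moreover have "t * \<kappa> = (480001/480000) * (\<rho> * t)" unfolding \<kappa>_def by (simp add: algebra_simps)
      moreover have "\<rho> * t \<ge> \<rho> * 1000000" using rho tbig by (intro mult_left_mono) auto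
      ultimately have "(960001/960000) * (\<rho> * t) \<le> f (real m)" using rho by linarith
      then have "\<rho>*(960001/960000) * t \<le> f (real m)" by (simp add: algebra_simps)
      then have "\<rho>*(960001/960000) \<le> f (real m) / t" using tbig by (simp add: le_divide_eq)
      then show "ereal (\<rho>*(960001/960000)) \<le> ereal (f (real m) / sqrt (real m))" unfolding t_def by simp
    qed
    have "ereal (s/2) < ereal (\<rho>*(960001/960000))" using rho \<rho>_def by simp
    also have "\<dots> \<le> liminf (\<lambda>n::nat. ereal (f (real n) / sqrt (real n)))"
      by (rule Liminf_bounded[OF ev])
    finally show "liminf (\<lambda>n::nat. ereal (f (real n) / sqrt (real n))) > ereal (s / 2)" .
  qed
qed

end
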